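(* Let $\sigma\in(0,1)$, let $\mathcal T_\bullet$ be a mesh of $\Gamma$ satisfying (M1)–(M3) together with functions $\Psi_{\bullet,T,j}$ as in (S4), and let $T\in\mathcal T_\bullet$. Then there is $C>0$, depending only on $d$, $\sigma$, $\Gamma$ and the constants in (M1)–(M3) and (S4), such that every $v\in H^\sigma(\Gamma)^D$ with $\int_\Gamma\overline{v_j}\,(\Psi_{\bullet,T,j})_j\,dx=0$ for all $j\in\{1,\dots,D\}$ satisfies $$\|h_\bullet^{-\sigma}v\|_{L^2(T)}\le C|v|_{H^\sigma(\pi_\bullet^{q_{\rm supp}}(T))}.$$
   Context: $d\ge2$, $\Omega\subset\mathbb R^d$ bounded Lipschitz, $\Gamma=\partial\Omega$, $D\ge1$. For measurable $\omega\subseteq\Gamma$: $|v|_{H^\sigma(\omega)}^2=\sum_j\int_\omega\int_\omega\frac{|v_j(x)-v_j(y)|^2}{|x-y|^{d-1+2\sigma}}dxdy$. A mesh $\mathcal T_\bullet$ is a finite set of compact sets $T=\gamma_T(\widehat T)\subseteq\Gamma$ ($\widehat T$ a compact Lipschitz domain in $\mathbb R^{d-1}$, $\gamma_T$ bi-Lipschitz) covering $\Gamma$ with pairwise intersections of measure zero; $h_\bullet|_T=h_T=|T|^{1/(d-1)}$. Patches: $\pi^0_\bullet(\omega)=\omega$, $\pi^q_\bullet(\omega)=\bigcup\{T\in\mathcal T_\bullet:T\cap\pi^{q-1}_\bullet(\omega)\ne\emptyset\}$, $\Pi^q_\bullet(\omega)=\{T:T\subseteq\pi^q_\bullet(\omega)\}$,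 $\pi_\bullet=\pi^1_\bullet$, $\Pi_\bullet=\Pi^1_\bullet$. (M1) $\#\Pi_\bullet(T)\le C_{\rm patch}$; (M2) ${\rm diam}(T)/{\rm diam}(T')\le C_{\rm locuni}$ for $T'\in\Pi_\bullet(T)$; (M3) $C_{\rm shape}^{-1}\le{\rm diam}(T)/h_T\le C_{\rm shape}$. (S4): there are $q_{\rm supp}\in\mathbb N_0$, $0<q_{\rm unity}<1$ and for each $T\in\mathcal T_\bullet$, $j\in\{1,\dots,D\}$ a function $\Psi_{\bullet,T,j}\in L^2(\Gamma)^D$ with $T\subseteq{\rm supp}(\Psi_{\bullet,T,j})\subseteq\pi^{q_{\rm supp}}_\bullet(T)$, $(\Psi_{\bullet,T,j})_{j'}=0$ for $j'\ne j$, and $\|1-(\Psi_{\bullet,T,j})_j\|_{L^2({\rm supp}\Psi_{\bullet,T,j})}\le q_{\rm unity}|{\rm supp}(\Psi_{\bullet,T,j})_j|^{1/2}$. *)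

theory Defs
  imports "HOL-Analysis.Analysis"
begin

text \<open>Normalising constant of the s-dimensional Hausdorff measure (volume of the unit s-ball).\<close>
definition hausdorff_const :: "real \<Rightarrow> real" where
  "hausdorff_const s = pi powr (s / 2) / Gamma (s / 2 + 1)"

definition hausdorff_content :: "real \<Rightarrow> real \<Rightarrow> 'a::euclidean_space set \<Rightarrow> ennreal" where
  "hausdorff_content s \<delta> A =
     (INF E \<in> {E :: nat \<Rightarrow> 'a set. A \<subseteq> (\<Union>i. E i) \<and> (\<forall>i. bounded (E i) \<and> diameter (E i) \<le> \<delta>)}.
        (\<Sum>i. ennreal (hausdorff_const s * (diameter (E i) / 2) powr s)))"

definition hausdorff_outer :: "real \<Rightarrow> 'a::euclidean_space set \<Rightarrow> ennreal" where
  "hausdorff_outer s A = (SUP \<delta> \<in> {0<..}. hausdorff_content s \<delta> A)"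

definition hausdorff_measure :: "real \<Rightarrow> 'a::euclidean_space measure" where
  "hausdorff_measure s = measure_of UNIV (sets borel) (hausdorff_outer s)"

definition surf :: "'a::euclidean_space measure" where
  "surf = hausdorff_measure (real (DIM('a) - 1))"

definition lipschitz_domain :: "'a::euclidean_space set \<Rightarrow> bool" where
  "lipschitz_domain \<Omega> \<longleftrightarrow> bounded \<Omega> \<and> open \<Omega> \<and> connected \<Omega> \<and> \<Omega> \<noteq> {} \<and>
     (\<forall>x0 \<in> frontier \<Omega>. \<exists>(e::'a) r (g::'a \<Rightarrow> real) L.
        norm e = 1 \<and> r > 0 \<and> L-lipschitz_on {y. y \<bullet> e = 0} g \<and>
        \<Omega> \<inter> ball x0 r = {x \<in> ball x0 r. x \<bullet> e < g (x - (x \<bullet> e) *\<^sub>R e)})"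

definition compact_lipschitz_domain :: "'a::euclidean_space set \<Rightarrow> bool" where
  "compact_lipschitz_domain K \<longleftrightarrow> (\<exists>U. lipschitz_domain U \<and> K = closure U)"

definition bi_lipschitz_on :: "'b::metric_space set \<Rightarrow> ('b \<Rightarrow> 'a::metric_space) \<Rightarrow> bool" where
  "bi_lipschitz_on S \<gamma> \<longleftrightarrow> (\<exists>L>0. \<forall>x\<in>S. \<forall>y\<in>S.
      dist x y \<le> L * dist (\<gamma> x) (\<gamma> y) \<and> dist (\<gamma> x) (\<gamma> y) \<le> L * dist x y)"

text \<open>A mesh of \<Gamma> whose elements are bi-Lipschitz images of compact Lipschitz domains in the
  parameter space 'b (which is meant to be R^(d-1)).\<close>
definition mesh :: "'b::euclidean_space itself \<Rightarrow> 'a::euclidean_space set \<Rightarrow> 'a set set \<Rightarrow> bool" where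
  "mesh _ \<Gamma> \<T> \<longleftrightarrow> finite \<T> \<and> \<Union>\<T> = \<Gamma> \<and>
     (\<forall>T\<in>\<T>. compact T \<and> T \<subseteq> \<Gamma> \<and>
        (\<exists>(Th::'b set) (\<gamma>::'b \<Rightarrow> 'a). compact_lipschitz_domain Th \<and> bi_lipschitz_on Th \<gamma> \<and> T = \<gamma> ` Th)) \<and>
     (\<forall>T\<in>\<T>. \<forall>T'\<in>\<T>. T \<noteq> T' \<longrightarrow> emeasure surf (T \<inter> T') = 0)"

definition elsize :: "'a::euclidean_space set \<Rightarrow> real" where
  "elsize T = measure surf T powr (1 / real (DIM('a) - 1))"

fun patch :: "'a set set \<Rightarrow> nat \<Rightarrow> 'a set \<Rightarrow> 'a set" where
  "patch \<T> 0 \<omega> = \<omega>"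
| "patch \<T> (Suc q) \<omega> = \<Union>{T \<in> \<T>. T \<inter> patch \<T> q \<omega> \<noteq> {}}"

definition patch_elems :: "'a set set \<Rightarrow> nat \<Rightarrow> 'a set \<Rightarrow> 'a set set" where
  "patch_elems \<T> q \<omega> = {T \<in> \<T>. T \<subseteq> patch \<T> q \<omega>}"

definition mesh_M1 :: "'a set set \<Rightarrow> real \<Rightarrow> bool" where
  "mesh_M1 \<T> Cpatch \<longleftrightarrow> (\<forall>T\<in>\<T>. real (card (patch_elems \<T> 1 T)) \<le> Cpatch)"

definition mesh_M2 :: "'a::euclidean_space set set \<Rightarrow> real \<Rightarrow> bool" where
  "mesh_M2 \<T> Clocuni \<longleftrightarrow> (\<forall>T\<in>\<T>. \<forall>T'\<in>patch_elems \<T> 1 T. diameter T / diameter T' \<le> Clocuni)"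

definition mesh_M3 :: "'a::euclidean_space set set \<Rightarrow> real \<Rightarrow> bool" where
  "mesh_M3 \<T> Cshape \<longleftrightarrow> (\<forall>T\<in>\<T>. 1 / Cshape \<le> diameter T / elsize T \<and> diameter T / elsize T \<le> Cshape)"

section \<open>Vector-valued functions on \<Gamma> (components indexed by 1..D)\<close>

definition L2_on :: "'a::euclidean_space set \<Rightarrow> ('a \<Rightarrow> complex) \<Rightarrow> bool" where
  "L2_on A f \<longleftrightarrow> set_borel_measurable surf A f \<and> (\<integral>\<^sup>+x\<in>A. ennreal ((cmod (f x))\<^sup>2) \<partial>surf) < \<infinity>"

definition L2_norm_sq :: "nat \<Rightarrow> 'a::euclidean_space set \<Rightarrow> ('a \<Rightarrow> nat \<Rightarrow> complex) \<Rightarrow> ennreal" where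
  "L2_norm_sq D \<omega> v = (\<Sum>j\<in>{1..D}. \<integral>\<^sup>+x\<in>\<omega>. ennreal ((cmod (v x j))\<^sup>2) \<partial>surf)"

definition Hs_semi_sq :: "nat \<Rightarrow> real \<Rightarrow> 'a::euclidean_space set \<Rightarrow> ('a \<Rightarrow> nat \<Rightarrow> complex) \<Rightarrow> ennreal" where
  "Hs_semi_sq D \<sigma> \<omega> v = (\<Sum>j\<in>{1..D}. \<integral>\<^sup>+x\<in>\<omega>. \<integral>\<^sup>+y\<in>\<omega>.
      ennreal ((cmod (v x j - v y j))\<^sup>2 / norm (x - y) powr (real (DIM('a) - 1) + 2 * \<sigma>)) \<partial>surf \<partial>surf)"

definition in_Hs :: "nat \<Rightarrow> real \<Rightarrow> 'a::euclidean_space set \<Rightarrow> ('a \<Rightarrow> nat \<Rightarrow> complex) \<Rightarrow> bool" where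
  "in_Hs D \<sigma> \<Gamma> v \<longleftrightarrow> (\<forall>j\<in>{1..D}. L2_on \<Gamma> (\<lambda>x. v x j)) \<and> Hs_semi_sq D \<sigma> \<Gamma> v < \<infinity>"

definition vsupp :: "nat \<Rightarrow> 'a::euclidean_space set \<Rightarrow> ('a \<Rightarrow> nat \<Rightarrow> complex) \<Rightarrow> 'a set" where
  "vsupp D \<Gamma> f = closure {x \<in> \<Gamma>. \<exists>j\<in>{1..D}. f x j \<noteq> 0}"

definition csupp :: "'a::euclidean_space set \<Rightarrow> ('a \<Rightarrow> complex) \<Rightarrow> 'a set" where
  "csupp \<Gamma> f = closure {x \<in> \<Gamma>. f x \<noteq> 0}"

definition S4 :: "nat \<Rightarrow> 'a::euclidean_space set \<Rightarrow> 'a set set \<Rightarrow> nat \<Rightarrow> real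
                   \<Rightarrow> ('a set \<Rightarrow> nat \<Rightarrow> 'a \<Rightarrow> nat \<Rightarrow> complex) \<Rightarrow> bool" where
  "S4 D \<Gamma> \<T> qsupp qunity \<Psi> \<longleftrightarrow> 0 < qunity \<and> qunity < 1 \<and>
     (\<forall>T\<in>\<T>. \<forall>j\<in>{1..D}.
        (\<forall>j'\<in>{1..D}. L2_on \<Gamma> (\<lambda>x. \<Psi> T j x j')) \<and>
        T \<subseteq> vsupp D \<Gamma> (\<Psi> T j) \<and> vsupp D \<Gamma> (\<Psi> T j) \<subseteq> patch \<T> qsupp T \<and>
        (\<forall>j'\<in>{1..D}. j' \<noteq> j \<longrightarrow> (\<forall>x\<in>\<Gamma>. \<Psi> T j x j' = 0)) \<and>
        sqrt (enn2real (\<integral>\<^sup>+x\<in>vsupp D \<Gamma> (\<Psi> T j). ennreal ((cmod (1 - \<Psi> T j x j))\<^sup>2) \<partial>surf))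
          \<le> qunity * sqrt (measure surf (csupp \<Gamma> (\<lambda>x. \<Psi> T j x j))))"

end

theory Submission
  imports Defs
begin



lemma nn_integral_cmult_le_gen:
  fixes c :: ennreal
  assumes c: "0 < c" "c < \<infinity>"
  shows "(\<integral>\<^sup>+x. c * f x \<partial>M) \<le> c * integral\<^sup>N M f"
proof -
  have ic: "inverse c * c = 1"
  proof -
    have "c / c = 1" using c by simp
    then show ?thesis by (simp add: divide_ennreal_def mult.commute)
  qed
  have "(\<integral>\<^sup>+x. c * f x \<partial>M) = (SUP g \<in> {g. simple_function M g \<and> g \<le> (\<lambda>x. c * f x)}. integral\<^sup>S M g)"
    by (simp add: nn_integral_def)
  also have "\<dots> \<le> c * integral\<^sup>N M f"
  proof (rule SUP_least)
    fix g assume g: "g \<in> {g. simple_function M g \<and> g \<le> (\<lambda>x. c * f x)}"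
    define g' where "g' = (\<lambda>x. inverse c * g x)"
    have sg': "simple_function M g'" using g unfolding g'_def by auto
    have "g' \<le> f"
    proof (rule le_funI)
      fix x
      have "g' x \<le> inverse c * (c * f x)" using g unfolding g'_def by (auto simp: le_fun_def intro: mult_left_mono)
      also have "\<dots> = f x" by (simp add: mult.assoc[symmetric] ic)
      finally show "g' x \<le> f x" .
    qed
    have eq: "(\<lambda>x. c * g' x) = g" unfolding g'_def by (auto simp: mult.assoc[symmetric] ic mult.commute[of c])
    have "integral\<^sup>S M g = c * integral\<^sup>S M g'"
      using simple_integral_mult[OF sg', of c] eq by simp
    also have "\<dots> = c * integral\<^sup>N M g'" using nn_integral_eq_simple_integral[OF sg'] by simp
    also have "\<dots> \<le> c * integral\<^sup>N M f" using \<open>g' \<le> f\<close> by (intro mult_left_mono nn_integral_mono) (auto simp: le_fun_def)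
    finally show "integral\<^sup>S M g \<le> c * integral\<^sup>N M f" .
  qed
  finally show ?thesis .
qed

lemma nn_integral_cmult_gen:
  fixes c :: ennreal
  assumes c: "0 < c" "c < \<infinity>"
  shows "(\<integral>\<^sup>+x. c * f x \<partial>M) = c * integral\<^sup>N M f"
proof (rule antisym)
  show "(\<integral>\<^sup>+x. c * f x \<partial>M) \<le> c * integral\<^sup>N M f" by (rule nn_integral_cmult_le_gen[OF c])
  have ic: "inverse c * c = 1"
  proof -
    have "c / c = 1" using c by simp
    then show ?thesis by (simp add: divide_ennreal_def mult.commute)
  qed
  have ic0: "0 < inverse c" "inverse c < \<infinity>" using c by (auto simp: ennreal_inverse_positive top.not_eq_extremum[symmetric])
  have "c * integral\<^sup>N M f = c * (\<integral>\<^sup>+x. inverse c * (c * f x) \<partial>M)"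
    by (simp add: mult.assoc[symmetric] ic)
  also have "\<dots> \<le> c * (inverse c * (\<integral>\<^sup>+x. c * f x \<partial>M))"
    by (intro mult_left_mono nn_integral_cmult_le_gen[OF ic0]) auto
  also have "\<dots> = (\<integral>\<^sup>+x. c * f x \<partial>M)" by (simp add: mult.assoc[symmetric] ic mult.commute[of c])
  finally show "c * integral\<^sup>N M f \<le> (\<integral>\<^sup>+x. c * f x \<partial>M)" .
qed



lemma cmod_sq_aux: "(cmod (1 - w))\<^sup>2 \<le> 2 + 2 * (cmod w)\<^sup>2"
proof -
  have "cmod (1 - w) \<le> 1 + cmod w" using norm_triangle_ineq4[of 1 w] by simp
  hence "(cmod (1 - w))\<^sup>2 \<le> (1 + cmod w)\<^sup>2" by (intro power_mono) auto
  also have "\<dots> \<le> 2 + 2 * (cmod w)\<^sup>2" using sum_squares_ge_zero[of "1 - cmod w" 0]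
    by (simp add: power2_eq_square algebra_simps)
  finally show ?thesis .
qed

lemma cmod_sq_aux2: "(cmod w)\<^sup>2 \<le> 2 + 2 * (cmod (1 - w))\<^sup>2"
  using cmod_sq_aux[of "1 - w"] by simp

lemma ennreal_sq_le_imp:
  assumes "(ennreal x)\<^sup>2 \<le> ennreal y" "0 \<le> x" "0 \<le> y"
  shows "x \<le> sqrt y"
proof -
  have "ennreal (x\<^sup>2) \<le> ennreal y" using assms by (simp add: ennreal_power)
  hence "x\<^sup>2 \<le> y" using assms by (simp add: ennreal_le_iff)
  thus ?thesis using assms by (simp add: real_le_rsqrt)
qed




lemma nn_integral_cmult_le_gen0:
  fixes c :: ennreal
  assumes c: "c < \<infinity>"
  shows "(\<integral>\<^sup>+x. c * f x \<partial>M) \<le> c * integral\<^sup>N M f"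
proof (cases "c = 0")
  case True thus ?thesis by simp
next
  case False thus ?thesis using nn_integral_cmult_le_gen[where c=c and f=f and M=M] c by (simp add: zero_less_iff_neq_zero)
qed

lemma cnj_meas[measurable (raw)]:
  "f \<in> borel_measurable M \<Longrightarrow> (\<lambda>x. cnj (f x)) \<in> borel_measurable M"
  by (rule borel_measurable_continuous_on[where f=cnj]) (auto intro: continuous_intros)

lemma core:
  fixes M :: "'a::euclidean_space measure" and u \<psi> :: "'a \<Rightarrow> complex"
    and \<Gamma> T \<omega> P :: "'a set" and q e :: real
  assumes sM: "sets M = sets borel"
    and \<Gamma>m: "\<Gamma> \<in> sets M" and \<Gamma>fin: "emeasure M \<Gamma> < \<infinity>"
    and um: "(\<lambda>x. indicator \<Gamma> x *\<^sub>R u x) \<in> borel_measurable M"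
    and \<psi>m: "(\<lambda>x. indicator \<Gamma> x *\<^sub>R \<psi> x) \<in> borel_measurable M"
    and uL2: "(\<integral>\<^sup>+x\<in>\<Gamma>. ennreal ((cmod (u x))\<^sup>2) \<partial>M) < \<infinity>"
    and \<psi>L2: "(\<integral>\<^sup>+x\<in>\<Gamma>. ennreal ((cmod (\<psi> x))\<^sup>2) \<partial>M) < \<infinity>"
    and sub: "T \<subseteq> \<omega>" "\<omega> \<subseteq> P" "P \<subseteq> \<Gamma>" and \<omega>m: "\<omega> \<in> sets M" and Tm: "T \<in> sets M"
    and \<psi>0: "\<forall>x\<in>\<Gamma>. x \<notin> \<omega> \<longrightarrow> \<psi> x = 0"
    and q: "0 < q" "q < 1"
    and unity: "sqrt (enn2real (\<integral>\<^sup>+x\<in>\<omega>. ennreal ((cmod (1 - \<psi> x))\<^sup>2) \<partial>M)) \<le> q * sqrt (measure M \<omega>)"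
    and orth: "(\<integral>x\<in>\<Gamma>. cnj (u x) * \<psi> x \<partial>M) = 0"
    and bP: "bounded P" and Tpos: "0 < measure M T"
    and e: "0 \<le> e"
  shows "ennreal ((1-q)\<^sup>2 * measure M T) * (\<integral>\<^sup>+x\<in>T. ennreal ((cmod (u x))\<^sup>2) \<partial>M)
         \<le> ennreal (4 * diameter P powr e) *
            (\<integral>\<^sup>+x\<in>P. (\<integral>\<^sup>+y\<in>P. ennreal ((cmod (u x - u y))\<^sup>2 / norm (x - y) powr e) \<partial>M) \<partial>M)"
proof -
  define U where "U = (\<lambda>x. indicator \<Gamma> x *\<^sub>R u x)"
  define W where "W = (\<lambda>x. indicator \<Gamma> x *\<^sub>R \<psi> x)"
  define m where "m = measure M \<omega>"
  define R where "R = diameter P"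
  have Um[measurable]: "U \<in> borel_measurable M" using um by (simp add: U_def)
  have Wm[measurable]: "W \<in> borel_measurable M" using \<psi>m by (simp add: W_def)
  have \<omega>m'[measurable]: "\<omega> \<in> sets M" by (rule \<omega>m)
  have Tm'[measurable]: "T \<in> sets M" by (rule Tm)
  have \<omega>\<Gamma>: "\<omega> \<subseteq> \<Gamma>" using sub by auto
  have W\<omega>: "W y = indicator \<omega> y *\<^sub>R W y" for y
    using \<psi>0 \<omega>\<Gamma> by (auto simp: W_def indicator_def)
  have W\<omega>': "y \<in> \<omega> \<Longrightarrow> W y = \<psi> y" for y using \<omega>\<Gamma> by (auto simp: W_def)
  have U\<Gamma>: "y \<in> \<Gamma> \<Longrightarrow> U y = u y" for y by (simp add: U_def)
  have \<omega>fin: "emeasure M \<omega> < \<infinity>"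
    using emeasure_mono[OF \<omega>\<Gamma> \<Gamma>m] \<Gamma>fin by (meson le_less_trans)
  have em: "emeasure M \<omega> = ennreal m" unfolding m_def using \<omega>fin
    by (simp add: emeasure_eq_ennreal_measure less_top)
  have Tle: "measure M T \<le> m" unfolding m_def
    using sub(1) \<omega>fin by (intro measure_mono_fmeasurable) (auto intro: fmeasurableI)
  have mpos: "0 < m" using Tpos Tle by linarith
  have WL2: "(\<integral>\<^sup>+y. ennreal ((cmod (W y))\<^sup>2) \<partial>M) < \<infinity>"
  proof -
    have "(\<integral>\<^sup>+y. ennreal ((cmod (W y))\<^sup>2) \<partial>M) = (\<integral>\<^sup>+x\<in>\<Gamma>. ennreal ((cmod (\<psi> x))\<^sup>2) \<partial>M)"
      by (intro nn_integral_cong) (auto simp: W_def indicator_def)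
    thus ?thesis using \<psi>L2 by simp
  qed
  have UL2: "(\<integral>\<^sup>+y. ennreal ((cmod (U y))\<^sup>2) \<partial>M) < \<infinity>"
  proof -
    have "(\<integral>\<^sup>+y. ennreal ((cmod (U y))\<^sup>2) \<partial>M) = (\<integral>\<^sup>+x\<in>\<Gamma>. ennreal ((cmod (u x))\<^sup>2) \<partial>M)"
      by (intro nn_integral_cong) (auto simp: U_def indicator_def)
    thus ?thesis using uL2 by simp
  qed
  define N1 where "N1 = (\<integral>\<^sup>+x. ennreal ((cmod (1 - W x))\<^sup>2) * indicator \<omega> x \<partial>M)"
  have N1eq: "(\<integral>\<^sup>+x\<in>\<omega>. ennreal ((cmod (1 - \<psi> x))\<^sup>2) \<partial>M) = N1"
    unfolding N1_def by (intro nn_integral_cong) (auto simp: W\<omega>' indicator_def)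
  have N1fin: "N1 < \<infinity>"
  proof -
    have "N1 \<le> (\<integral>\<^sup>+x. ennreal 2 * indicator \<omega> x + ennreal 2 * ennreal ((cmod (W x))\<^sup>2) \<partial>M)"
      unfolding N1_def
    proof (intro nn_integral_mono)
      fix x
      show "ennreal ((cmod (1 - W x))\<^sup>2) * indicator \<omega> x
            \<le> ennreal 2 * indicator \<omega> x + ennreal 2 * ennreal ((cmod (W x))\<^sup>2)"
      proof (cases "x \<in> \<omega>")
        case True
        have "ennreal ((cmod (1 - W x))\<^sup>2) \<le> ennreal (2 + 2 * (cmod (W x))\<^sup>2)"
          by (intro ennreal_leI cmod_sq_aux)
        also have "\<dots> = 2 + 2 * ennreal ((cmod (W x))\<^sup>2)" by (simp add: ennreal_plus ennreal_mult)
        finally show ?thesis using True by simp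
      qed simp
    qed
    also have "\<dots> = ennreal 2 * emeasure M \<omega> + ennreal 2 * (\<integral>\<^sup>+y. ennreal ((cmod (W y))\<^sup>2) \<partial>M)"
      by (subst nn_integral_add) (auto simp: nn_integral_cmult)
    also have "\<dots> < \<infinity>" using \<omega>fin WL2 by (simp add: ennreal_mult_less_top)
    finally show ?thesis .
  qed
  define a where "a = enn2real N1"
  have N1a: "N1 = ennreal a" unfolding a_def using N1fin by (simp add: less_top ennreal_enn2real)
  have a0: "0 \<le> a" by (simp add: a_def)
  have aq: "a \<le> q\<^sup>2 * m"
  proof -
    have "sqrt a \<le> q * sqrt m" using unity N1eq by (simp add: a_def m_def)
    hence "(sqrt a)\<^sup>2 \<le> (q * sqrt m)\<^sup>2" using a0 by (intro power_mono) auto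
    thus ?thesis using a0 mpos by (simp add: power_mult_distrib)
  qed
  define Wn where "Wn = (\<integral>\<^sup>+y. ennreal ((cmod (W y))\<^sup>2) \<partial>M)"
  have Wn4: "Wn \<le> ennreal (4 * m)"
  proof -
    have "Wn \<le> (\<integral>\<^sup>+x. ennreal 2 * indicator \<omega> x + ennreal 2 * (ennreal ((cmod (1 - W x))\<^sup>2) * indicator \<omega> x) \<partial>M)"
      unfolding Wn_def
    proof (intro nn_integral_mono)
      fix x
      show "ennreal ((cmod (W x))\<^sup>2)
            \<le> ennreal 2 * indicator \<omega> x + ennreal 2 * (ennreal ((cmod (1 - W x))\<^sup>2) * indicator \<omega> x)"
      proof (cases "x \<in> \<omega>")
        case True
        have "ennreal ((cmod (W x))\<^sup>2) \<le> ennreal (2 + 2 * (cmod (1 - W x))\<^sup>2)"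
          by (intro ennreal_leI cmod_sq_aux2)
        also have "\<dots> = 2 + 2 * ennreal ((cmod (1 - W x))\<^sup>2)" by (simp add: ennreal_plus ennreal_mult)
        finally show ?thesis using True by simp
      next
        case False
        then have "W x = 0" using W\<omega>[of x] by simp
        thus ?thesis using False by simp
      qed
    qed
    also have "\<dots> = ennreal 2 * emeasure M \<omega> + ennreal 2 * N1"
      unfolding N1_def by (subst nn_integral_add) (auto simp: nn_integral_cmult)
    also have "\<dots> = ennreal (2 * m + 2 * a)" using em N1a a0 mpos
      by (simp add: ennreal_plus ennreal_mult)
    also have "\<dots> \<le> ennreal (4 * m)"
    proof (intro ennreal_leI)
      have "q\<^sup>2 \<le> 1" using q by (simp add: power_le_one)
      hence "q\<^sup>2 * m \<le> m" using mpos by (simp add: mult_le_cancel_right1)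
      thus "2 * m + 2 * a \<le> 4 * m" using aq by linarith
    qed
    finally show ?thesis .
  qed
  have intW: "integrable M W"
  proof -
    have "(\<integral>\<^sup>+y. ennreal (cmod (W y)) * indicator \<omega> y \<partial>M)\<^sup>2
          \<le> (\<integral>\<^sup>+y. (ennreal (cmod (W y)))\<^sup>2 \<partial>M) * (\<integral>\<^sup>+y. (indicator \<omega> y)\<^sup>2 \<partial>M)"
      by (rule Cauchy_Schwarz_nn_integral) auto
    also have "\<dots> = Wn * emeasure M \<omega>"
    proof -
      have "(\<integral>\<^sup>+y. (ennreal (cmod (W y)))\<^sup>2 \<partial>M) = Wn" unfolding Wn_def by (simp add: ennreal_power)
      moreover have "(\<integral>\<^sup>+y. (indicator \<omega> y :: ennreal)\<^sup>2 \<partial>M) = (\<integral>\<^sup>+y. indicator \<omega> y \<partial>M)"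
        by (intro nn_integral_cong) (simp add: indicator_def)
      ultimately show ?thesis by simp
    qed
    also have "\<dots> < \<infinity>"
    proof -
      have "Wn < \<infinity>" using Wn4 ennreal_less_top[of "4*m"] by (simp add: le_less_trans)
      thus ?thesis using \<omega>fin by (simp add: ennreal_mult_less_top)
    qed
    finally have "(\<integral>\<^sup>+y. ennreal (cmod (W y)) * indicator \<omega> y \<partial>M) < \<infinity>"
      by (simp add: power_less_top_ennreal)
    moreover have "(\<integral>\<^sup>+y. ennreal (norm (W y)) \<partial>M) = (\<integral>\<^sup>+y. ennreal (cmod (W y)) * indicator \<omega> y \<partial>M)"
      by (intro nn_integral_cong) (subst W\<omega>, auto simp: indicator_def)
    ultimately show ?thesis by (simp add: integrable_iff_bounded)
  qed
  have intUW: "integrable M (\<lambda>y. cnj (U y) * W y)"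
  proof -
    have "(\<integral>\<^sup>+y. ennreal (cmod (U y)) * ennreal (cmod (W y)) \<partial>M)\<^sup>2
          \<le> (\<integral>\<^sup>+y. (ennreal (cmod (U y)))\<^sup>2 \<partial>M) * (\<integral>\<^sup>+y. (ennreal (cmod (W y)))\<^sup>2 \<partial>M)"
      by (rule Cauchy_Schwarz_nn_integral) auto
    also have "\<dots> < \<infinity>" using UL2 WL2 by (simp add: ennreal_power ennreal_mult_less_top)
    finally have "(\<integral>\<^sup>+y. ennreal (cmod (U y)) * ennreal (cmod (W y)) \<partial>M) < \<infinity>"
      by (simp add: power_less_top_ennreal)
    moreover have "(\<integral>\<^sup>+y. ennreal (norm (cnj (U y) * W y)) \<partial>M) = (\<integral>\<^sup>+y. ennreal (cmod (U y)) * ennreal (cmod (W y)) \<partial>M)"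
      by (intro nn_integral_cong) (simp add: norm_mult ennreal_mult)
    moreover have "(\<lambda>y. cnj (U y) * W y) \<in> borel_measurable M"
      using Um Wm by (intro borel_measurable_times cnj_meas)
    ultimately show ?thesis by (simp add: integrable_iff_bounded)
  qed
  have orth0: "integral\<^sup>L M (\<lambda>y. cnj (U y) * W y) = 0"
  proof -
    have "(\<lambda>y. cnj (U y) * W y) = (\<lambda>x. indicator \<Gamma> x *\<^sub>R (cnj (u x) * \<psi> x))"
      by (auto simp: U_def W_def indicator_def)
    thus ?thesis using orth by (simp add: set_lebesgue_integral_def)
  qed
  have spM: "space M = UNIV" using sets_eq_imp_space_eq[OF sM] by simp
  have intW_low: "(1 - q) * m \<le> norm (integral\<^sup>L M W)"
  proof -
    define V where "V = (\<lambda>y. complex_of_real (indicator \<omega> y) - W y)"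
    have intI: "integrable M (\<lambda>y. complex_of_real (indicator \<omega> y))"
      using \<omega>fin by (intro integrable_of_real integrable_real_indicator) auto
    have intV: "integrable M V" unfolding V_def using intI intW by auto
    have Vm[measurable]: "V \<in> borel_measurable M" using intV by auto
    have Weq: "W = (\<lambda>y. complex_of_real (indicator \<omega> y) - V y)" unfolding V_def by auto
    have IW: "integral\<^sup>L M W = complex_of_real m - integral\<^sup>L M V"
      by (subst Weq, subst Bochner_Integration.integral_diff[OF intI intV]) (simp add: m_def spM)
    have nV: "ennreal (norm (V y)) = ennreal (cmod (1 - W y)) * indicator \<omega> y * indicator \<omega> y" for y
    proof (cases "y \<in> \<omega>")
      case True thus ?thesis by (simp add: V_def)
    next
      case False thus ?thesis using W\<omega>[of y] by (simp add: V_def)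
    qed
    have "(ennreal (norm (integral\<^sup>L M V)))\<^sup>2 \<le> (\<integral>\<^sup>+y. ennreal (norm (V y)) \<partial>M)\<^sup>2"
      by (intro power_mono integral_norm_bound_ennreal intV) auto
    also have "\<dots> = (\<integral>\<^sup>+y. (ennreal (cmod (1 - W y)) * indicator \<omega> y) * indicator \<omega> y \<partial>M)\<^sup>2"
      by (simp add: nV)
    also have "\<dots> \<le> (\<integral>\<^sup>+y. (ennreal (cmod (1 - W y)) * indicator \<omega> y)\<^sup>2 \<partial>M) * (\<integral>\<^sup>+y. (indicator \<omega> y)\<^sup>2 \<partial>M)"
      by (rule Cauchy_Schwarz_nn_integral) auto
    also have "\<dots> = N1 * emeasure M \<omega>"
    proof -
      have "(\<integral>\<^sup>+y. (ennreal (cmod (1 - W y)) * indicator \<omega> y)\<^sup>2 \<partial>M) = N1"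
        unfolding N1_def by (intro nn_integral_cong) (simp add: indicator_def ennreal_power)
      moreover have "(\<integral>\<^sup>+y. (indicator \<omega> y :: ennreal)\<^sup>2 \<partial>M) = (\<integral>\<^sup>+y. indicator \<omega> y \<partial>M)"
        by (intro nn_integral_cong) (simp add: indicator_def)
      ultimately show ?thesis by simp
    qed
    also have "\<dots> = ennreal (a * m)" using N1a em a0 mpos by (simp add: ennreal_mult)
    finally have "norm (integral\<^sup>L M V) \<le> sqrt (a * m)"
      by (rule ennreal_sq_le_imp) (use a0 mpos in auto)
    also have "\<dots> \<le> sqrt ((q * m)\<^sup>2)"
      using aq mpos by (intro real_sqrt_le_mono) (simp add: power2_eq_square mult_right_mono)
    also have "\<dots> = q * m" using q mpos by simp
    finally have nVb: "norm (integral\<^sup>L M V) \<le> q * m" .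
    have "m - norm (integral\<^sup>L M V) \<le> norm (integral\<^sup>L M W)"
      using norm_triangle_ineq2[of "complex_of_real m" "integral\<^sup>L M V"] mpos by (simp add: IW)
    thus ?thesis using nVb by (simp add: algebra_simps)
  qed
  define J where "J = (\<lambda>x. \<integral>\<^sup>+y. ennreal ((cmod (u x - U y))\<^sup>2) * indicator \<omega> y \<partial>M)"
  have point: "ennreal ((cmod (u x))\<^sup>2 * ((1-q)\<^sup>2 * m)) \<le> 4 * J x" for x
  proof -
    define c where "c = cnj (u x)"
    have eqf: "(\<lambda>y. (c - cnj (U y)) * W y) = (\<lambda>y. c * W y - cnj (U y) * W y)"
      by (auto simp: algebra_simps)
    have int1: "integrable M (\<lambda>y. c * W y)" using intW by auto
    have intd: "integrable M (\<lambda>y. (c - cnj (U y)) * W y)" unfolding eqf using int1 intUW by auto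
    have I: "integral\<^sup>L M (\<lambda>y. (c - cnj (U y)) * W y) = c * integral\<^sup>L M W"
      unfolding eqf by (subst Bochner_Integration.integral_diff[OF int1 intUW]) (simp add: orth0)
    have nrm: "ennreal (norm ((c - cnj (U y)) * W y))
        = (ennreal (cmod (u x - U y)) * indicator \<omega> y) * ennreal (cmod (W y))" for y
    proof (cases "y \<in> \<omega>")
      case True
      have "cmod (c - cnj (U y)) = cmod (u x - U y)" unfolding c_def
        by (metis complex_cnj_diff complex_mod_cnj)
      thus ?thesis using True by (simp add: norm_mult ennreal_mult)
    next
      case False thus ?thesis using W\<omega>[of y] by simp
    qed
    have "(ennreal (cmod (u x) * norm (integral\<^sup>L M W)))\<^sup>2
          = (ennreal (norm (integral\<^sup>L M (\<lambda>y. (c - cnj (U y)) * W y))))\<^sup>2"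
      by (simp only: I) (simp add: norm_mult c_def)
    also have "\<dots> \<le> (\<integral>\<^sup>+y. ennreal (norm ((c - cnj (U y)) * W y)) \<partial>M)\<^sup>2"
      by (intro power_mono integral_norm_bound_ennreal intd) auto
    also have "\<dots> = (\<integral>\<^sup>+y. (ennreal (cmod (u x - U y)) * indicator \<omega> y) * ennreal (cmod (W y)) \<partial>M)\<^sup>2"
      by (simp add: nrm)
    also have "\<dots> \<le> (\<integral>\<^sup>+y. (ennreal (cmod (u x - U y)) * indicator \<omega> y)\<^sup>2 \<partial>M) * (\<integral>\<^sup>+y. (ennreal (cmod (W y)))\<^sup>2 \<partial>M)"
      by (rule Cauchy_Schwarz_nn_integral) auto
    also have "\<dots> = J x * Wn"
    proof -
      have "(\<integral>\<^sup>+y. (ennreal (cmod (u x - U y)) * indicator \<omega> y)\<^sup>2 \<partial>M) = J x"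
        unfolding J_def by (intro nn_integral_cong) (simp add: indicator_def ennreal_power)
      moreover have "(\<integral>\<^sup>+y. (ennreal (cmod (W y)))\<^sup>2 \<partial>M) = Wn" unfolding Wn_def by (simp add: ennreal_power)
      ultimately show ?thesis by simp
    qed
    also have "\<dots> \<le> J x * ennreal (4 * m)" by (intro mult_left_mono Wn4) auto
    finally have A: "(ennreal (cmod (u x) * norm (integral\<^sup>L M W)))\<^sup>2 \<le> J x * ennreal (4 * m)" .
    have "ennreal ((cmod (u x))\<^sup>2 * ((1-q)\<^sup>2 * m\<^sup>2)) = (ennreal (cmod (u x) * ((1 - q) * m)))\<^sup>2"
      using q mpos by (simp add: ennreal_power power_mult_distrib)
    also have "\<dots> \<le> (ennreal (cmod (u x) * norm (integral\<^sup>L M W)))\<^sup>2"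
      using intW_low by (intro power_mono ennreal_leI mult_left_mono) auto
    finally have B: "ennreal ((cmod (u x))\<^sup>2 * ((1-q)\<^sup>2 * m\<^sup>2)) \<le> J x * ennreal (4 * m)"
      using A by (rule order_trans)
    show ?thesis
    proof (cases "J x = \<infinity>")
      case True thus ?thesis by simp
    next
      case False
      then obtain j where j: "J x = ennreal j" "0 \<le> j" by (cases "J x") auto
      have "(cmod (u x))\<^sup>2 * ((1-q)\<^sup>2 * m\<^sup>2) \<le> j * (4 * m)"
        using B j mpos by (simp add: ennreal_mult[symmetric] ennreal_le_iff)
      hence "((cmod (u x))\<^sup>2 * ((1-q)\<^sup>2 * m)) * m \<le> (4 * j) * m"
        by (simp add: power2_eq_square algebra_simps)
      hence "(cmod (u x))\<^sup>2 * ((1-q)\<^sup>2 * m) \<le> 4 * j" using mpos by simp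
      hence "ennreal ((cmod (u x))\<^sup>2 * ((1-q)\<^sup>2 * m)) \<le> ennreal (4 * j)" by (rule ennreal_leI)
      thus ?thesis using j by (simp add: ennreal_mult)
    qed
  qed
  define G where "G = (\<lambda>x. \<integral>\<^sup>+y. ennreal ((cmod (u x - u y))\<^sup>2 / norm (x - y) powr e) * indicator P y \<partial>M)"
  have JG: "J x \<le> ennreal (R powr e) * G x" if xT: "x \<in> T" for x
  proof -
    have "J x \<le> (\<integral>\<^sup>+y. ennreal (R powr e) * (ennreal ((cmod (u x - u y))\<^sup>2 / norm (x - y) powr e) * indicator P y) \<partial>M)"
      unfolding J_def
    proof (intro nn_integral_mono)
      fix y
      show "ennreal ((cmod (u x - U y))\<^sup>2) * indicator \<omega> y
        \<le> ennreal (R powr e) * (ennreal ((cmod (u x - u y))\<^sup>2 / norm (x - y) powr e) * indicator P y)"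
      proof (cases "y \<in> \<omega>")
        case False thus ?thesis by simp
      next
        case True
        have yP: "y \<in> P" and xP: "x \<in> P" using True xT sub by auto
        have Uy: "U y = u y" using True \<omega>\<Gamma> U\<Gamma> by auto
        have "(cmod (u x - u y))\<^sup>2 \<le> R powr e * ((cmod (u x - u y))\<^sup>2 / norm (x - y) powr e)"
        proof (cases "x = y")
          case True thus ?thesis by simp
        next
          case False
          define n where "n = norm (x - y)"
          have npos: "0 < n" using False by (simp add: n_def)
          have nR: "n \<le> R" unfolding n_def R_def dist_norm[symmetric]
            using diameter_bounded_bound[OF bP xP yP] .
          have pe: "n powr e \<le> R powr e" using npos nR e by (intro powr_mono2) auto
          have pp: "0 < n powr e" using npos by simp
          have "(cmod (u x - u y))\<^sup>2 = n powr e * ((cmod (u x - u y))\<^sup>2 / n powr e)" using pp by simp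
          also have "\<dots> \<le> R powr e * ((cmod (u x - u y))\<^sup>2 / n powr e)"
            using pe pp by (intro mult_right_mono) auto
          finally show ?thesis by (simp add: n_def)
        qed
        hence "ennreal ((cmod (u x - u y))\<^sup>2) \<le> ennreal (R powr e * ((cmod (u x - u y))\<^sup>2 / norm (x - y) powr e))"
          by (rule ennreal_leI)
        also have "\<dots> = ennreal (R powr e) * ennreal ((cmod (u x - u y))\<^sup>2 / norm (x - y) powr e)"
          by (intro ennreal_mult) auto
        finally show ?thesis using True yP Uy by simp
      qed
    qed
    also have "\<dots> \<le> ennreal (R powr e) * G x" unfolding G_def
      by (rule nn_integral_cmult_le_gen0) simp
    finally show ?thesis .
  qed
  define c1 where "c1 = (1-q)\<^sup>2 * measure M T"
  have c1pos: "0 < c1" using q Tpos by (simp add: c1_def)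
  have "ennreal c1 * (\<integral>\<^sup>+x\<in>T. ennreal ((cmod (u x))\<^sup>2) \<partial>M)
        = (\<integral>\<^sup>+x. ennreal c1 * (ennreal ((cmod (u x))\<^sup>2) * indicator T x) \<partial>M)"
    using c1pos by (intro nn_integral_cmult_gen[symmetric]) auto
  also have "\<dots> \<le> (\<integral>\<^sup>+x. ennreal (4 * R powr e) * (G x * indicator P x) \<partial>M)"
  proof (intro nn_integral_mono)
    fix x
    show "ennreal c1 * (ennreal ((cmod (u x))\<^sup>2) * indicator T x) \<le> ennreal (4 * R powr e) * (G x * indicator P x)"
    proof (cases "x \<in> T")
      case False thus ?thesis by simp
    next
      case True
      have xP: "x \<in> P" using True sub by auto
      have "ennreal c1 * (ennreal ((cmod (u x))\<^sup>2) * indicator T x) = ennreal ((cmod (u x))\<^sup>2 * c1)"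
        using True c1pos by (simp add: ennreal_mult mult.commute)
      also have "\<dots> \<le> ennreal ((cmod (u x))\<^sup>2 * ((1-q)\<^sup>2 * m))"
        unfolding c1_def using Tle by (intro ennreal_leI mult_left_mono) auto
      also have "\<dots> \<le> 4 * J x" by (rule point)
      also have "\<dots> \<le> 4 * (ennreal (R powr e) * G x)" using JG[OF True] by (intro mult_left_mono) auto
      also have "\<dots> = ennreal (4 * R powr e) * (G x * indicator P x)"
        using xP by (simp add: ennreal_mult mult.assoc)
      finally show ?thesis .
    qed
  qed
  also have "\<dots> \<le> ennreal (4 * R powr e) * (\<integral>\<^sup>+x. G x * indicator P x \<partial>M)"
    by (rule nn_integral_cmult_le_gen0) simp
  finally show ?thesis unfolding c1_def G_def R_def .
qed



lemma patch_sub: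
  assumes "T \<in> \<T>" shows "patch \<T> k T \<subseteq> \<Union>\<T>"
  using assms by (cases k) auto

lemma patch_diam:
  fixes \<T> :: "'a::euclidean_space set set"
  assumes comp: "\<forall>T'\<in>\<T>. compact T'" and M2: "mesh_M2 \<T> Cl"
    and dpos: "\<forall>T'\<in>\<T>. 0 < diameter T'" and T: "T \<in> \<T>"
  shows "bounded (patch \<T> k T) \<and> diameter (patch \<T> k T) \<le> 2 * (real k + 1) * (max 1 Cl) ^ k * diameter T"
proof -
  define L where "L = max 1 Cl"
  define d where "d = diameter T"
  have L1: "1 \<le> L" by (simp add: L_def)
  have d0: "0 < d" using dpos T by (simp add: d_def)
  have "T \<noteq> {}" using d0 by (auto simp: d_def)
  then obtain x0 where x0: "x0 \<in> T" by auto
  have bT: "bounded T'" if "T' \<in> \<T>" for T' using comp that by (simp add: compact_imp_bounded)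
  have nb: "diameter T2 \<le> L * diameter T1" if "T1 \<in> \<T>" "T2 \<in> \<T>" "T1 \<inter> T2 \<noteq> {}" for T1 T2
  proof -
    have "T1 \<in> patch_elems \<T> 1 T2" using that by (auto simp: patch_elems_def)
    hence "diameter T2 / diameter T1 \<le> Cl" using M2 that by (auto simp: mesh_M2_def)
    moreover have "0 < diameter T1" using dpos that by auto
    ultimately have "diameter T2 \<le> Cl * diameter T1" by (simp add: divide_le_eq)
    also have "\<dots> \<le> L * diameter T1" using \<open>0 < diameter T1\<close> by (intro mult_right_mono) (auto simp: L_def)
    finally show ?thesis .
  qed
  have claim: "(\<forall>y\<in>patch \<T> k T. dist x0 y \<le> (real k + 1) * L ^ k * d) \<and>
               (\<forall>T'\<in>\<T>. T' \<inter> patch \<T> k T \<noteq> {} \<longrightarrow> diameter T' \<le> L ^ (k+1) * d)"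
  proof (induction k)
    case 0
    have "dist x0 y \<le> d" if "y \<in> T" for y using diameter_bounded_bound[OF bT[OF T] x0 that] by (simp add: d_def)
    moreover have "diameter T' \<le> L * d" if "T' \<in> \<T>" "T' \<inter> T \<noteq> {}" for T'
      using nb[OF T that(1)] that(2) by (auto simp: d_def)
    ultimately show ?case by simp
  next
    case (Suc k)
    have A: "dist x0 y \<le> (real (Suc k) + 1) * L ^ Suc k * d" if y: "y \<in> patch \<T> (Suc k) T" for y
    proof -
      obtain T' where T': "T' \<in> \<T>" "T' \<inter> patch \<T> k T \<noteq> {}" "y \<in> T'" using y by auto
      obtain z where z: "z \<in> T'" "z \<in> patch \<T> k T" using T'(2) by auto
      have "dist x0 y \<le> dist x0 z + dist z y" by (rule dist_triangle)
      also have "\<dots> \<le> (real k + 1) * L ^ k * d + L ^ (k+1) * d"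
        using Suc.IH z T' diameter_bounded_bound[OF bT[OF T'(1)] z(1) T'(3)] by (intro add_mono) auto
      also have "\<dots> \<le> (real k + 1) * L ^ (k+1) * d + L ^ (k+1) * d"
      proof -
        have "L ^ k \<le> L ^ (k+1)" using L1 by (intro power_increasing) auto
        thus ?thesis using d0 by (intro add_mono mult_right_mono mult_left_mono) auto
      qed
      also have "\<dots> = (real (Suc k) + 1) * L ^ Suc k * d" by (simp add: algebra_simps)
      finally show ?thesis .
    qed
    have B: "diameter T'' \<le> L ^ (Suc k + 1) * d" if T'': "T'' \<in> \<T>" "T'' \<inter> patch \<T> (Suc k) T \<noteq> {}" for T''
    proof -
      obtain T' where T': "T' \<in> \<T>" "T' \<inter> patch \<T> k T \<noteq> {}" "T'' \<inter> T' \<noteq> {}" using T''(2) by auto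
      have "diameter T'' \<le> L * diameter T'" using nb[OF T'(1) T''(1)] T'(3) by auto
      also have "\<dots> \<le> L * (L ^ (k+1) * d)" using Suc.IH T' L1 by (intro mult_left_mono) auto
      finally show ?thesis by simp
    qed
    show ?case using A B by blast
  qed
  define r where "r = (real k + 1) * L ^ k * d"
  have r0: "0 \<le> r" using L1 d0 by (simp add: r_def)
  have sub: "patch \<T> k T \<subseteq> cball x0 r" using claim by (auto simp: r_def)
  have "bounded (patch \<T> k T)" using sub bounded_cball bounded_subset by blast
  moreover have "diameter (patch \<T> k T) \<le> 2 * r" using diameter_subset[OF sub] r0 by simp
  ultimately show ?thesis by (simp add: r_def L_def d_def algebra_simps)
qed

lemma surf_le_outer: "emeasure (surf :: 'a::euclidean_space measure) A \<le> hausdorff_outer (real (DIM('a) - 1)) A"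
  unfolding surf_def hausdorff_measure_def emeasure_measure_of_conv by auto

lemma sets_surf: "sets (surf :: 'a::euclidean_space measure) = sets borel"
  unfolding surf_def hausdorff_measure_def using sets.sigma_sets_eq[of borel] by (simp add: sets_measure_of_conv)

lemma surf_singleton:
  assumes "DIM('a) \<ge> 2"
  shows "emeasure (surf :: 'a::euclidean_space measure) {x} = 0"
proof -
  define s where "s = real (DIM('a) - 1)"
  have s0: "s \<noteq> 0" using assms by (simp add: s_def)
  have "hausdorff_content s \<delta> {x} = 0" if "0 < \<delta>" for \<delta>
  proof -
    define E where "E = (\<lambda>i::nat. if i = 0 then {x} else ({}::'a set))"
    have "hausdorff_content s \<delta> {x} \<le> (\<Sum>i. ennreal (hausdorff_const s * (diameter (E i) / 2) powr s))"
      unfolding hausdorff_content_def using that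
      by (intro INF_lower) (auto simp: E_def)
    also have "\<dots> = 0"
    proof -
      have "(\<lambda>i. ennreal (hausdorff_const s * (diameter (E i) / 2) powr s)) = (\<lambda>i. 0)"
        by (rule ext) (simp add: E_def s0)
      thus ?thesis by simp
    qed
    finally show ?thesis by simp
  qed
  hence "hausdorff_outer s {x} = 0" unfolding hausdorff_outer_def by simp
  thus ?thesis using surf_le_outer[of "{x}"] by (simp add: s_def)
qed



theorem lemma4p7:
  fixes \<Omega> :: "'a::euclidean_space set"
    and param :: "'b::euclidean_space itself"
    and \<sigma> Cpatch Clocuni Cshape qunity :: real
    and qsupp :: nat
  assumes "DIM('a) \<ge> 2" and "DIM('b) + 1 = DIM('a)"
    and "lipschitz_domain \<Omega>"
    and "0 < \<sigma>" and "\<sigma> < 1"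
  shows "\<exists>C>0. \<forall>(D::nat) (\<T>::'a set set) \<Psi> T (v::'a \<Rightarrow> nat \<Rightarrow> complex).
           D \<ge> 1 \<and> mesh param (frontier \<Omega>) \<T> \<and>
           mesh_M1 \<T> Cpatch \<and> mesh_M2 \<T> Clocuni \<and> mesh_M3 \<T> Cshape \<and>
           S4 D (frontier \<Omega>) \<T> qsupp qunity \<Psi> \<and> T \<in> \<T> \<and>
           in_Hs D \<sigma> (frontier \<Omega>) v \<and>
           (\<forall>j\<in>{1..D}. (\<integral>x\<in>frontier \<Omega>. cnj (v x j) * \<Psi> T j x j \<partial>surf) = 0)
           \<longrightarrow> elsize T powr (- \<sigma>) * sqrt (enn2real (L2_norm_sq D T v))
               \<le> C * sqrt (enn2real (Hs_semi_sq D \<sigma> (patch \<T> qsupp T) v))"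
proof -
  define s where "s = real (DIM('a) - 1)"
  define e where "e = s + 2 * \<sigma>"
  have s1: "1 \<le> s" using assms(1) by (simp add: s_def)
  have e0: "0 \<le> e" using s1 assms(4) by (simp add: e_def)
  define L where "L = max 1 Clocuni"
  define K where "K = 2 * (real qsupp + 1) * L ^ qsupp * Cshape"
  define A where "A = 4 / (1 - qunity)\<^sup>2"
  show ?thesis
  proof (cases "0 < qunity \<and> qunity < 1 \<and> 0 < Cshape")
    case False
    show ?thesis
    proof (intro exI[of _ 1] conjI allI impI)
      fix D \<T> \<Psi> T and v :: "'a \<Rightarrow> nat \<Rightarrow> complex"
      assume H: "D \<ge> 1 \<and> mesh param (frontier \<Omega>) \<T> \<and>
           mesh_M1 \<T> Cpatch \<and> mesh_M2 \<T> Clocuni \<and> mesh_M3 \<T> Cshape \<and>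
           S4 D (frontier \<Omega>) \<T> qsupp qunity \<Psi> \<and> T \<in> \<T> \<and>
           in_Hs D \<sigma> (frontier \<Omega>) v \<and>
           (\<forall>j\<in>{1..D}. (\<integral>x\<in>frontier \<Omega>. cnj (v x j) * \<Psi> T j x j \<partial>surf) = 0)"
      have q: "0 < qunity" "qunity < 1" using H by (auto simp: S4_def)
      hence Cs: "Cshape \<le> 0" using False by auto
      have T: "T \<in> \<T>" using H by auto
      have cT: "compact T" using H T by (auto simp: mesh_def)
      have r: "1 / Cshape \<le> diameter T / elsize T \<and> diameter T / elsize T \<le> Cshape"
        using H T by (auto simp: mesh_M3_def)
      have d0: "0 \<le> diameter T" using cT by (simp add: diameter_ge_0 compact_imp_bounded)
      have h0: "0 \<le> elsize T" by (simp add: elsize_def)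
      have "diameter T / elsize T = 0" using r Cs d0 h0
        by (smt (verit) divide_nonneg_nonneg)
      hence "diameter T = 0 \<or> elsize T = 0" by simp
      have hz: "elsize T = 0"
      proof (cases "elsize T = 0")
        case False
        hence dz: "diameter T = 0" using \<open>diameter T = 0 \<or> elsize T = 0\<close> by simp
        have "measure surf T = 0"
        proof (cases "T = {}")
          case True thus ?thesis by simp
        next
          case False
          then obtain x where x: "x \<in> T" by auto
          have "T \<subseteq> {x}"
          proof
            fix y assume "y \<in> T"
            hence "dist x y \<le> 0" using diameter_bounded_bound[OF compact_imp_bounded[OF cT] x] dz by simp
            thus "y \<in> {x}" by simp
          qed
          hence "emeasure surf T \<le> emeasure surf {x}"
            by (intro emeasure_mono) (auto simp: sets_surf)
          hence "emeasure surf T = 0" using surf_singleton[OF assms(1), of x] by simp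
          thus ?thesis by (simp add: measure_def)
        qed
        thus ?thesis by (simp add: elsize_def)
      qed (simp)
      show "elsize T powr (- \<sigma>) * sqrt (enn2real (L2_norm_sq D T v))
               \<le> 1 * sqrt (enn2real (Hs_semi_sq D \<sigma> (patch \<T> qsupp T) v))"
        using hz by simp
    qed simp
  next
    case True
    hence q: "0 < qunity" "qunity < 1" and Cs: "0 < Cshape" by auto
    have L1: "1 \<le> L" by (simp add: L_def)
    have Kpos: "0 < K" using Cs L1 by (simp add: K_def)
    have Apos: "0 < A" using q by (simp add: A_def)
    define C where "C = sqrt (A * K powr e)"
    have Cpos: "0 < C" using Apos Kpos by (simp add: C_def)
    show ?thesis
    proof (intro exI[of _ C] conjI allI impI Cpos)
      fix D \<T> \<Psi> T and v :: "'a \<Rightarrow> nat \<Rightarrow> complex"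
      assume H: "D \<ge> 1 \<and> mesh param (frontier \<Omega>) \<T> \<and>
           mesh_M1 \<T> Cpatch \<and> mesh_M2 \<T> Clocuni \<and> mesh_M3 \<T> Cshape \<and>
           S4 D (frontier \<Omega>) \<T> qsupp qunity \<Psi> \<and> T \<in> \<T> \<and>
           in_Hs D \<sigma> (frontier \<Omega>) v \<and>
           (\<forall>j\<in>{1..D}. (\<integral>x\<in>frontier \<Omega>. cnj (v x j) * \<Psi> T j x j \<partial>surf) = 0)"
      define \<Gamma> where "\<Gamma> = frontier \<Omega>"
      define P where "P = patch \<T> qsupp T"
      have T: "T \<in> \<T>" using H by auto
      have meshH: "mesh param \<Gamma> \<T>" using H by (simp add: \<Gamma>_def)
      have fin: "finite \<T>" and Un: "\<Union>\<T> = \<Gamma>" and comp: "\<forall>T'\<in>\<T>. compact T'"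
        using meshH by (auto simp: mesh_def)
      have M2: "mesh_M2 \<T> Clocuni" and M3: "mesh_M3 \<T> Cshape" using H by auto
      have S4H: "S4 D \<Gamma> \<T> qsupp qunity \<Psi>" using H by (simp add: \<Gamma>_def)
      have HsH: "in_Hs D \<sigma> \<Gamma> v" using H by (simp add: \<Gamma>_def)
      have orth: "\<forall>j\<in>{1..D}. (\<integral>x\<in>\<Gamma>. cnj (v x j) * \<Psi> T j x j \<partial>surf) = 0" using H by (simp add: \<Gamma>_def)
      have pos: "0 < diameter T' \<and> 0 < elsize T'" if "T' \<in> \<T>" for T'
      proof -
        have "1 / Cshape \<le> diameter T' / elsize T'" using M3 that by (auto simp: mesh_M3_def)
        hence "0 < diameter T' / elsize T'" using Cs by (smt (verit) divide_pos_pos)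
        moreover have "0 \<le> diameter T'" using comp that by (simp add: diameter_ge_0 compact_imp_bounded)
        moreover have "0 \<le> elsize T'" by (simp add: elsize_def)
        ultimately show ?thesis by (auto simp: zero_less_divide_iff)
      qed
      have mpos: "0 < measure surf T'" if "T' \<in> \<T>" for T'
      proof -
        have "elsize T' \<noteq> 0" using pos[OF that] by simp
        hence "measure surf T' \<noteq> 0" by (auto simp: elsize_def)
        thus ?thesis using measure_nonneg[of surf T'] by linarith
      qed
      have efin: "emeasure surf T' < \<infinity>" if "T' \<in> \<T>" for T'
      proof (rule ccontr)
        assume "\<not> emeasure surf T' < \<infinity>"
        hence "emeasure surf T' = \<infinity>" by (simp add: less_top[symmetric])
        hence "measure surf T' = 0" by (simp add: measure_def)
        thus False using mpos[OF that] by simp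
      qed
      have setsT: "T' \<in> sets surf" if "T' \<in> \<T>" for T'
        using comp that by (auto simp: sets_surf intro!: borel_closed compact_imp_closed)
      have \<Gamma>fin: "emeasure surf \<Gamma> < \<infinity>"
      proof -
        have "emeasure surf (\<Union>T'\<in>\<T>. T') \<le> (\<Sum>T'\<in>\<T>. emeasure surf T')"
          using fin setsT by (intro emeasure_subadditive_finite) auto
        also have "\<dots> < \<infinity>" using fin efin by simp
        finally show ?thesis using Un by simp
      qed
      have \<Gamma>closed: "closed \<Gamma>" by (simp add: \<Gamma>_def)
      have \<Gamma>m: "\<Gamma> \<in> sets surf" using \<Gamma>closed by (simp add: sets_surf)
      define h where "h = elsize T"
      define \<mu> where "\<mu> = measure surf T"
      have hpos: "0 < h" using pos[OF T] by (simp add: h_def)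
      have \<mu>pos: "0 < \<mu>" using mpos[OF T] by (simp add: \<mu>_def)
      have dT: "diameter T \<le> Cshape * h"
      proof -
        have "diameter T / h \<le> Cshape" using M3 T by (auto simp: mesh_M3_def h_def)
        thus ?thesis using hpos by (simp add: divide_le_eq mult.commute)
      qed
      have PD: "bounded P \<and> diameter P \<le> 2 * (real qsupp + 1) * L ^ qsupp * diameter T"
        unfolding P_def L_def using patch_diam[OF comp M2 _ T] pos by auto
      have dP: "diameter P \<le> K * h"
      proof -
        have f: "0 \<le> 2 * (real qsupp + 1) * L ^ qsupp" using L1 by simp
        have "diameter P \<le> (2 * (real qsupp + 1) * L ^ qsupp) * diameter T" using PD by simp
        also have "\<dots> \<le> (2 * (real qsupp + 1) * L ^ qsupp) * (Cshape * h)" by (rule mult_left_mono[OF dT f])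
        finally show ?thesis by (simp add: K_def mult_ac)
      qed
      have dP0: "0 \<le> diameter P" using PD by (simp add: diameter_ge_0)
      have hs: "h powr s = \<mu>"
        using \<mu>pos s1 by (simp add: h_def \<mu>_def elsize_def s_def powr_powr powr_one)
      have dPe: "diameter P powr e \<le> K powr e * (\<mu> * h powr (2 * \<sigma>))"
      proof -
        have "diameter P powr e \<le> (K * h) powr e" using dP dP0 e0 by (intro powr_mono2) auto
        also have "\<dots> = K powr e * (h powr s * h powr (2 * \<sigma>))" by (simp add: powr_mult e_def powr_add)
        finally show ?thesis by (simp add: hs)
      qed
      have PG: "P \<subseteq> \<Gamma>" using patch_sub[OF T, of qsupp] Un by (simp add: P_def)
      have Lj: "(\<integral>\<^sup>+x\<in>T. ennreal ((cmod (v x j))\<^sup>2) \<partial>surf)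
          \<le> ennreal (A * K powr e * h powr (2 * \<sigma>)) *
             (\<integral>\<^sup>+x\<in>P. (\<integral>\<^sup>+y\<in>P. ennreal ((cmod (v x j - v y j))\<^sup>2 / norm (x - y) powr e) \<partial>surf) \<partial>surf)"
        if j: "j \<in> {1..D}" for j
      proof -
        define \<omega> where "\<omega> = vsupp D \<Gamma> (\<Psi> T j)"
        have S4j: "(\<forall>j'\<in>{1..D}. L2_on \<Gamma> (\<lambda>x. \<Psi> T j x j')) \<and>
          T \<subseteq> vsupp D \<Gamma> (\<Psi> T j) \<and> vsupp D \<Gamma> (\<Psi> T j) \<subseteq> patch \<T> qsupp T \<and>
          (\<forall>j'\<in>{1..D}. j' \<noteq> j \<longrightarrow> (\<forall>x\<in>\<Gamma>. \<Psi> T j x j' = 0)) \<and>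
          sqrt (enn2real (\<integral>\<^sup>+x\<in>vsupp D \<Gamma> (\<Psi> T j). ennreal ((cmod (1 - \<Psi> T j x j))\<^sup>2) \<partial>surf))
            \<le> qunity * sqrt (measure surf (csupp \<Gamma> (\<lambda>x. \<Psi> T j x j)))"
          using S4H T j unfolding S4_def by blast
        have \<psi>L2on: "L2_on \<Gamma> (\<lambda>x. \<Psi> T j x j)" using S4j j by blast
        have uL2on: "L2_on \<Gamma> (\<lambda>x. v x j)" using HsH j by (simp add: in_Hs_def)
        have zero: "\<forall>j'\<in>{1..D}. j' \<noteq> j \<longrightarrow> (\<forall>x\<in>\<Gamma>. \<Psi> T j x j' = 0)" using S4j by blast
        have setseq: "{x \<in> \<Gamma>. \<exists>j'\<in>{1..D}. \<Psi> T j x j' \<noteq> 0} = {x \<in> \<Gamma>. \<Psi> T j x j \<noteq> 0}"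
        proof (intro set_eqI iffI)
          fix x assume "x \<in> {x \<in> \<Gamma>. \<exists>j'\<in>{1..D}. \<Psi> T j x j' \<noteq> 0}"
          then obtain j' where "x \<in> \<Gamma>" "j' \<in> {1..D}" "\<Psi> T j x j' \<noteq> 0" by blast
          moreover hence "j' = j" using zero by blast
          ultimately show "x \<in> {x \<in> \<Gamma>. \<Psi> T j x j \<noteq> 0}" by simp
        next
          fix x assume "x \<in> {x \<in> \<Gamma>. \<Psi> T j x j \<noteq> 0}"
          thus "x \<in> {x \<in> \<Gamma>. \<exists>j'\<in>{1..D}. \<Psi> T j x j' \<noteq> 0}" using j by blast
        qed
        have cs: "csupp \<Gamma> (\<lambda>x. \<Psi> T j x j) = \<omega>"
          unfolding csupp_def \<omega>_def vsupp_def setseq ..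
        have \<psi>0: "\<forall>x\<in>\<Gamma>. x \<notin> \<omega> \<longrightarrow> \<Psi> T j x j = 0"
        proof (intro ballI impI)
          fix x assume "x \<in> \<Gamma>" "x \<notin> \<omega>"
          thus "\<Psi> T j x j = 0" using closure_subset[of "{x \<in> \<Gamma>. \<Psi> T j x j \<noteq> 0}"]
            unfolding \<omega>_def vsupp_def setseq by blast
        qed
        have \<omega>m: "\<omega> \<in> sets surf" by (simp add: \<omega>_def vsupp_def sets_surf)
        have C0: "ennreal ((1-qunity)\<^sup>2 * measure surf T) * (\<integral>\<^sup>+x\<in>T. ennreal ((cmod (v x j))\<^sup>2) \<partial>surf)
         \<le> ennreal (4 * diameter P powr e) *
            (\<integral>\<^sup>+x\<in>P. (\<integral>\<^sup>+y\<in>P. ennreal ((cmod (v x j - v y j))\<^sup>2 / norm (x - y) powr e) \<partial>surf) \<partial>surf)"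
        proof (rule core[where M=surf and u="\<lambda>x. v x j" and \<psi>="\<lambda>x. \<Psi> T j x j" and \<Gamma>=\<Gamma> and T=T and \<omega>=\<omega> and P=P and q=qunity and e=e])
          show "sets surf = sets borel" by (rule sets_surf)
          show "\<Gamma> \<in> sets surf" by (rule \<Gamma>m)
          show "emeasure surf \<Gamma> < \<infinity>" by (rule \<Gamma>fin)
          show "(\<lambda>x. indicator \<Gamma> x *\<^sub>R v x j) \<in> borel_measurable surf"
            using uL2on by (simp add: L2_on_def set_borel_measurable_def)
          show "(\<lambda>x. indicator \<Gamma> x *\<^sub>R \<Psi> T j x j) \<in> borel_measurable surf"
            using \<psi>L2on by (simp add: L2_on_def set_borel_measurable_def)
          show "(\<integral>\<^sup>+x\<in>\<Gamma>. ennreal ((cmod (v x j))\<^sup>2) \<partial>surf) < \<infinity>"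
            using uL2on by (simp add: L2_on_def)
          show "(\<integral>\<^sup>+x\<in>\<Gamma>. ennreal ((cmod (\<Psi> T j x j))\<^sup>2) \<partial>surf) < \<infinity>"
            using \<psi>L2on by (simp add: L2_on_def)
          show "T \<subseteq> \<omega>" "\<omega> \<subseteq> P" using S4j by (auto simp: \<omega>_def P_def)
          show "P \<subseteq> \<Gamma>" by (rule PG)
          show "\<omega> \<in> sets surf" by (rule \<omega>m)
          show "T \<in> sets surf" by (rule setsT[OF T])
          show "\<forall>x\<in>\<Gamma>. x \<notin> \<omega> \<longrightarrow> \<Psi> T j x j = 0" by (rule \<psi>0)
          show "0 < qunity" "qunity < 1" by (rule q(1), rule q(2))
          show "sqrt (enn2real (\<integral>\<^sup>+x\<in>\<omega>. ennreal ((cmod (1 - \<Psi> T j x j))\<^sup>2) \<partial>surf)) \<le> qunity * sqrt (measure surf \<omega>)"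
            using S4j cs by (simp add: \<omega>_def)
          show "(\<integral>x\<in>\<Gamma>. cnj (v x j) * \<Psi> T j x j \<partial>surf) = 0" using orth j by blast
          show "bounded P" using PD by simp
          show "0 < measure surf T" by (rule mpos[OF T])
          show "0 \<le> e" by (rule e0)
        qed
        define c where "c = (1-qunity)\<^sup>2 * \<mu>"
        define B where "B = A * K powr e * h powr (2 * \<sigma>)"
        have cpos: "0 < c" using q \<mu>pos by (simp add: c_def)
        have B0: "0 \<le> B" using Apos by (simp add: B_def)
        have cB: "4 * diameter P powr e \<le> c * B"
        proof -
          have "c * B = (A * (1-qunity)\<^sup>2) * (K powr e * (\<mu> * h powr (2 * \<sigma>)))"
            by (simp add: c_def B_def mult_ac)
          also have "A * (1-qunity)\<^sup>2 = 4" using q by (simp add: A_def)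
          finally show ?thesis using dPe by simp
        qed
        have "ennreal c * (\<integral>\<^sup>+x\<in>T. ennreal ((cmod (v x j))\<^sup>2) \<partial>surf)
          \<le> ennreal (4 * diameter P powr e) *
            (\<integral>\<^sup>+x\<in>P. (\<integral>\<^sup>+y\<in>P. ennreal ((cmod (v x j - v y j))\<^sup>2 / norm (x - y) powr e) \<partial>surf) \<partial>surf)"
          using C0 by (simp add: c_def \<mu>_def)
        also have "\<dots> \<le> ennreal (c * B) *
            (\<integral>\<^sup>+x\<in>P. (\<integral>\<^sup>+y\<in>P. ennreal ((cmod (v x j - v y j))\<^sup>2 / norm (x - y) powr e) \<partial>surf) \<partial>surf)"
          by (intro mult_right_mono ennreal_leI cB) simp
        also have "\<dots> = ennreal c * (ennreal B *
            (\<integral>\<^sup>+x\<in>P. (\<integral>\<^sup>+y\<in>P. ennreal ((cmod (v x j - v y j))\<^sup>2 / norm (x - y) powr e) \<partial>surf) \<partial>surf))"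
          using cpos B0 by (simp add: ennreal_mult mult.assoc)
        finally show ?thesis using cpos by (subst (asm) ennreal_mult_le_mult_iff) (auto simp: B_def)
      qed
      show "elsize T powr (- \<sigma>) * sqrt (enn2real (L2_norm_sq D T v))
               \<le> C * sqrt (enn2real (Hs_semi_sq D \<sigma> (patch \<T> qsupp T) v))"
      proof -
        define B where "B = A * K powr e * h powr (2 * \<sigma>)"
        have B0: "0 \<le> B" using Apos by (simp add: B_def)
        have Lsum: "L2_norm_sq D T v \<le> ennreal B * Hs_semi_sq D \<sigma> P v"
          unfolding L2_norm_sq_def Hs_semi_sq_def sum_distrib_left
          using Lj by (intro sum_mono) (simp add: e_def s_def B_def)
        have HsP: "Hs_semi_sq D \<sigma> P v \<le> Hs_semi_sq D \<sigma> \<Gamma> v"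
          unfolding Hs_semi_sq_def
        proof (intro sum_mono nn_integral_mono)
          fix j x
          show "(\<integral>\<^sup>+y. ennreal ((cmod (v x j - v y j))\<^sup>2 / norm (x - y) powr (real (DIM('a) - 1) + 2 * \<sigma>)) * indicator P y \<partial>surf) * indicator P x
             \<le> (\<integral>\<^sup>+y. ennreal ((cmod (v x j - v y j))\<^sup>2 / norm (x - y) powr (real (DIM('a) - 1) + 2 * \<sigma>)) * indicator \<Gamma> y \<partial>surf) * indicator \<Gamma> x"
          proof (cases "x \<in> P")
            case False thus ?thesis by simp
          next
            case True
            hence "x \<in> \<Gamma>" using PG by auto
            moreover have "(\<integral>\<^sup>+y. ennreal ((cmod (v x j - v y j))\<^sup>2 / norm (x - y) powr (real (DIM('a) - 1) + 2 * \<sigma>)) * indicator P y \<partial>surf)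
               \<le> (\<integral>\<^sup>+y. ennreal ((cmod (v x j - v y j))\<^sup>2 / norm (x - y) powr (real (DIM('a) - 1) + 2 * \<sigma>)) * indicator \<Gamma> y \<partial>surf)"
              using PG by (intro nn_integral_mono mult_left_mono) (auto simp: indicator_def)
            ultimately show ?thesis using True by simp
          qed
        qed
        have Hfin: "Hs_semi_sq D \<sigma> P v < \<infinity>" using HsP HsH by (simp add: in_Hs_def le_less_trans)
        define H where "H = enn2real (Hs_semi_sq D \<sigma> P v)"
        have H0: "0 \<le> H" by (simp add: H_def)
        have "enn2real (L2_norm_sq D T v) \<le> enn2real (ennreal B * Hs_semi_sq D \<sigma> P v)"
          using Lsum Hfin by (intro enn2real_mono) (auto simp: ennreal_mult_less_top)
        also have "\<dots> = B * H" using B0 by (simp add: enn2real_mult H_def)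
        finally have LB: "enn2real (L2_norm_sq D T v) \<le> B * H" .
        have sq: "sqrt (h powr (2 * \<sigma>)) = h powr \<sigma>"
        proof -
          have "h powr (2 * \<sigma>) = (h powr \<sigma>)\<^sup>2" by (simp add: power2_eq_square powr_add[symmetric])
          thus ?thesis by simp
        qed
        have hh: "h powr (- \<sigma>) * h powr \<sigma> = 1" using hpos by (simp add: powr_add[symmetric])
        have "h powr (- \<sigma>) * sqrt (enn2real (L2_norm_sq D T v)) \<le> h powr (- \<sigma>) * sqrt (B * H)"
          using LB by (intro mult_left_mono real_sqrt_le_mono) auto
        also have "sqrt (B * H) = sqrt (A * K powr e) * h powr \<sigma> * sqrt H"
          by (simp add: B_def real_sqrt_mult sq)
        also have "h powr (- \<sigma>) * (sqrt (A * K powr e) * h powr \<sigma> * sqrt H) = C * sqrt H"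
          using hh by (simp add: C_def mult_ac)
        finally show ?thesis by (simp add: h_def H_def P_def)
      qed
    qed
  qed
qed


end
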